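(* Under the standing assumptions, let $\lambda_*>0$. Then $J(u)\ge\lambda_*H(u)$ for all $u\in X$ if and only if $J^*(\zeta)\le\lambda_*^{1-q}H^*(\zeta)$ for all $\zeta\in X^*$. Moreover, if $u_*$ is a $p$-eigenvector of $J$ with subgradient $\zeta_*$ and eigenvalue $\lambda_*=\min_{u\ne0}R(u)$, then $R_*(\zeta_* )=\lambda_*^{1-q}=\max_{\zeta\ne0}R_*(\zeta)$, so both bounds are sharp.
   Context: Standing assumptions: $X$ is a real reflexive Banach space with dual $X^*$ and duality pairing $\langle\cdot,\cdot\rangle$; $\Gamma_0(X)$ is the class of proper, lower semi-continuous, convex functionals $X\to\mathbb{R}\cup\{+\infty\}$. Fix $1<p<\infty$ and $q=\frac{p}{p-1}$. Let $J\in\Gamma_0(X)$, and let $H\in\Gamma_0(X)$ be absolutely $p$-homogeneous ($H(tu)=|t|^pH(u)$) such that $|u|_H:=(pH(u))^{1/p}$ is a norm on $X$, so $H(u)=\frac1p|u|_H^p$. The dual norm is $|\zeta|_{H^*}=\sup_{u\ne0}\langle\zeta,u\rangle/|u|_H$, and $H^*(\zeta)=\frac1q|\zeta|_{H^*}^q$. The Fenchel conjugate is $J^*(\zeta)=\sup_{u\in X}\langle\zeta,u\rangle-J(u)$ and the subdifferential is $\partial J(u)=\{\zeta\in X^*:\ J(u)+\langle\zeta,v-u\rangle\le J(v)\ \forall v\in X\}$. Growth assumption: there is $c>0$ with $H(u)\le cJ(u)$ for all $u\in X$. The Rayleigh quotient is $R(u)=J(u)/H(u)$ for $u\ne0$ and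 the dual Rayleigh quotient is $R_*(\zeta)=J^*(\zeta)/H^*(\zeta)$ for $\zeta\ne0$. A $p$-eigenvector of $J$: $u\in X\setminus\{0\}$ with subgradient $\zeta\in\partial J(u)$ and eigenvalue $\lambda=R(u)\in\mathbb{R}$ such that $\zeta\in\lambda\,\partial H(u)$. *)

theory Defs
  imports "HOL-Analysis.Analysis"
begin

text \<open>The real Banach space X is a type 'a of class banach; its dual X* is the type
  'a \<Rightarrow>L real of bounded linear functionals; the duality pairing of z and u is
  blinfun_apply z u.  Functionals X \<rightarrow> R \<union> {+\<infinity>} are modelled as maps into ereal
  that never take the value -\<infinity>.\<close>

definition reflexive_space :: "'a::real_normed_vector itself \<Rightarrow> bool" where
  "reflexive_space _ \<longleftrightarrow>
     (\<forall>phi :: ('a \<Rightarrow>\<^sub>L real) \<Rightarrow>\<^sub>L real. \<exists>u::'a. \<forall>z. blinfun_apply phi z = blinfun_apply z u)"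

definition proper_fun :: "('a \<Rightarrow> ereal) \<Rightarrow> bool" where
  "proper_fun f \<longleftrightarrow> (\<forall>x. f x \<noteq> -\<infinity>) \<and> (\<exists>x. f x \<noteq> \<infinity>)"

definition lsc_fun :: "('a::topological_space \<Rightarrow> ereal) \<Rightarrow> bool" where
  "lsc_fun f \<longleftrightarrow> (\<forall>c::real. closed {x. f x \<le> ereal c})"

definition convex_fun :: "('a::real_vector \<Rightarrow> ereal) \<Rightarrow> bool" where
  "convex_fun f \<longleftrightarrow> (\<forall>x y t. 0 < t \<and> t < 1 \<longrightarrow>
      f (t *\<^sub>R x + (1 - t) *\<^sub>R y) \<le> ereal t * f x + ereal (1 - t) * f y)"

definition Gamma0 :: "('a::real_normed_vector \<Rightarrow> ereal) \<Rightarrow> bool" where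
  "Gamma0 f \<longleftrightarrow> proper_fun f \<and> lsc_fun f \<and> convex_fun f"

definition is_norm :: "('a::real_vector \<Rightarrow> real) \<Rightarrow> bool" where
  "is_norm N \<longleftrightarrow> (\<forall>x. N x = 0 \<longleftrightarrow> x = 0) \<and> (\<forall>c x. N (c *\<^sub>R x) = \<bar>c\<bar> * N x)
     \<and> (\<forall>x y. N (x + y) \<le> N x + N y)"

definition H_norm :: "real \<Rightarrow> ('a \<Rightarrow> ereal) \<Rightarrow> 'a \<Rightarrow> real" where
  "H_norm p H u = (p * real_of_ereal (H u)) powr (1 / p)"

text \<open>Standing assumptions on H: in Gamma0, absolutely p-homogeneous, and |.|_H is a
  (real-valued) norm on X.\<close>
definition admissible_H :: "real \<Rightarrow> ('a::real_normed_vector \<Rightarrow> ereal) \<Rightarrow> bool" where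
  "admissible_H p H \<longleftrightarrow> Gamma0 H \<and> (\<forall>t u. H (t *\<^sub>R u) = ereal (\<bar>t\<bar> powr p) * H u)
     \<and> (\<forall>u. H u \<noteq> \<infinity>) \<and> is_norm (H_norm p H)"

definition fenchel_conj :: "('a \<Rightarrow> ereal) \<Rightarrow> ('a::real_normed_vector \<Rightarrow>\<^sub>L real) \<Rightarrow> ereal" where
  "fenchel_conj J z = (SUP u. ereal (blinfun_apply z u) - J u)"

definition subdiff :: "('a::real_normed_vector \<Rightarrow> ereal) \<Rightarrow> 'a \<Rightarrow> ('a \<Rightarrow>\<^sub>L real) set" where
  "subdiff J u = {z. \<forall>v. J u + ereal (blinfun_apply z (v - u)) \<le> J v}"

definition rayleigh :: "('a \<Rightarrow> ereal) \<Rightarrow> ('a \<Rightarrow> ereal) \<Rightarrow> 'a \<Rightarrow> ereal" where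
  "rayleigh J H u = J u / H u"

definition dual_rayleigh :: "('a::real_normed_vector \<Rightarrow> ereal) \<Rightarrow> ('a \<Rightarrow> ereal)
    \<Rightarrow> ('a \<Rightarrow>\<^sub>L real) \<Rightarrow> ereal" where
  "dual_rayleigh J H z = fenchel_conj J z / fenchel_conj H z"

definition p_eigenvector :: "('a::real_normed_vector \<Rightarrow> ereal) \<Rightarrow> ('a \<Rightarrow> ereal)
    \<Rightarrow> 'a \<Rightarrow> ('a \<Rightarrow>\<^sub>L real) \<Rightarrow> real \<Rightarrow> bool" where
  "p_eigenvector J H u z lam \<longleftrightarrow> u \<noteq> 0 \<and> z \<in> subdiff J u \<and> rayleigh J H u = ereal lam
     \<and> z \<in> (\<lambda>w. lam *\<^sub>R w) ` subdiff H u"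

end

theory Submission
  imports Defs "HOL-Analysis.Analysis"
begin

definition hb_adm :: "('a::real_vector \<Rightarrow> real) \<Rightarrow> 'a \<Rightarrow> ('a \<times> real) set \<Rightarrow> bool" where
  "hb_adm P u0 G \<longleftrightarrow> (0,0) \<in> G \<and> (\<forall>a\<in>G. \<forall>b\<in>G. a + b \<in> G) \<and> (\<forall>c. \<forall>a\<in>G. c *\<^sub>R a \<in> G)
     \<and> (\<forall>x a b. (x,a) \<in> G \<longrightarrow> (x,b) \<in> G \<longrightarrow> a = b) \<and> (\<forall>x a. (x,a) \<in> G \<longrightarrow> a \<le> P x)
     \<and> (u0, P u0) \<in> G"

lemma hb_admD:
  assumes "hb_adm P u0 G"
  shows "(0,0) \<in> G" "\<And>a b. a \<in> G \<Longrightarrow> b \<in> G \<Longrightarrow> a + b \<in> G"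
    "\<And>c a. a \<in> G \<Longrightarrow> c *\<^sub>R a \<in> G"
    "\<And>x a b. (x,a) \<in> G \<Longrightarrow> (x,b) \<in> G \<Longrightarrow> a = b"
    "\<And>x a. (x,a) \<in> G \<Longrightarrow> a \<le> P x" "(u0, P u0) \<in> G"
  using assms unfolding hb_adm_def by auto

lemma hb_base:
  fixes P :: "'a::real_vector \<Rightarrow> real"
  assumes hom: "\<And>c x. P (c *\<^sub>R x) = \<bar>c\<bar> * P x" and nn: "\<And>x. 0 \<le> P x"
  shows "hb_adm P u0 (range (\<lambda>t. (t *\<^sub>R u0, t * P u0)))"
proof -
  have P0: "P 0 = 0" using hom[of 0 0] by simp
  show ?thesis unfolding hb_adm_def
  proof (intro conjI allI ballI impI)
    show "(0,0) \<in> range (\<lambda>t. (t *\<^sub>R u0, t * P u0))" by (rule image_eqI[of _ _ 0]) auto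
    show "(u0, P u0) \<in> range (\<lambda>t. (t *\<^sub>R u0, t * P u0))" by (rule image_eqI[of _ _ 1]) auto
  next
    fix a b assume "a \<in> range (\<lambda>t. (t *\<^sub>R u0, t * P u0))" "b \<in> range (\<lambda>t. (t *\<^sub>R u0, t * P u0))"
    then obtain s t where "a = (s *\<^sub>R u0, s * P u0)" "b = (t *\<^sub>R u0, t * P u0)" by auto
    then show "a + b \<in> range (\<lambda>t. (t *\<^sub>R u0, t * P u0))"
      by (intro image_eqI[of _ _ "s+t"]) (auto simp: algebra_simps)
  next
    fix c a assume "a \<in> range (\<lambda>t. (t *\<^sub>R u0, t * P u0))"
    then obtain s where "a = (s *\<^sub>R u0, s * P u0)" by auto
    then show "c *\<^sub>R a \<in> range (\<lambda>t. (t *\<^sub>R u0, t * P u0))"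
      by (intro image_eqI[of _ _ "c * s"]) (auto simp: algebra_simps)
  next
    fix x a b assume "(x, a) \<in> range (\<lambda>t. (t *\<^sub>R u0, t * P u0))" "(x, b) \<in> range (\<lambda>t. (t *\<^sub>R u0, t * P u0))"
    then obtain s t where "(x,a) = (s *\<^sub>R u0, s * P u0)" "(x,b) = (t *\<^sub>R u0, t * P u0)" by blast
    then have st: "x = s *\<^sub>R u0" "a = s * P u0" "x = t *\<^sub>R u0" "b = t * P u0" by auto
    show "a = b"
    proof (cases "u0 = 0")
      case True then show ?thesis using st P0 by simp
    next
      case False
      then have "s = t" using st by (metis scaleR_cancel_right)
      then show ?thesis using st by simp
    qed
  next
    fix x a assume "(x, a) \<in> range (\<lambda>t. (t *\<^sub>R u0, t * P u0))"
    then obtain s where st: "x = s *\<^sub>R u0" "a = s * P u0" by auto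
    have "s * P u0 \<le> \<bar>s\<bar> * P u0" using nn[of u0] by (simp add: mult_right_mono)
    then show "a \<le> P x" using st hom by simp
  qed
qed

lemma hb_chain:
  assumes "C \<in> chains {G. hb_adm P u0 G}" "C \<noteq> {}"
  shows "hb_adm P u0 (\<Union>C)"
proof -
  have CA: "\<And>G. G \<in> C \<Longrightarrow> hb_adm P u0 G" using assms(1) by (auto simp: chains_def)
  have ch: "\<And>G1 G2. G1 \<in> C \<Longrightarrow> G2 \<in> C \<Longrightarrow> G1 \<subseteq> G2 \<or> G2 \<subseteq> G1"
    using assms(1) by (auto simp: chains_def chain_subset_def)
  obtain G0 where G0: "G0 \<in> C" using assms(2) by auto
  have two: "\<exists>G\<in>C. a \<in> G \<and> b \<in> G" if ab: "a \<in> \<Union>C" "b \<in> \<Union>C" for a b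
  proof -
    obtain G1 G2 where "G1 \<in> C" "G2 \<in> C" "a \<in> G1" "b \<in> G2" using ab by (meson UnionE)
    then show ?thesis using ch[of G1 G2] by blast
  qed
  show ?thesis unfolding hb_adm_def
  proof (intro conjI allI ballI impI)
    show "(0,0) \<in> \<Union>C" using G0 CA[OF G0] unfolding hb_adm_def by blast
    show "(u0, P u0) \<in> \<Union>C" using G0 CA[OF G0] unfolding hb_adm_def by blast
  next
    fix a b assume "a \<in> \<Union>C" "b \<in> \<Union>C"
    then obtain G where "G \<in> C" "a \<in> G" "b \<in> G" using two by blast
    then show "a + b \<in> \<Union>C" using CA unfolding hb_adm_def by blast
  next
    fix c a assume "a \<in> \<Union>C"
    then obtain G where "G \<in> C" "a \<in> G" by blast
    then show "c *\<^sub>R a \<in> \<Union>C" using CA unfolding hb_adm_def by blast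
  next
    fix x a b assume "(x,a) \<in> \<Union>C" "(x,b) \<in> \<Union>C"
    then obtain G where "G \<in> C" "(x,a) \<in> G" "(x,b) \<in> G" using two by blast
    then show "a = b" using CA unfolding hb_adm_def by blast
  next
    fix x a assume "(x,a) \<in> \<Union>C"
    then obtain G where "G \<in> C" "(x,a) \<in> G" by blast
    then show "a \<le> P x" using CA unfolding hb_adm_def by blast
  qed
qed

lemma hb_extend:
  fixes P :: "'a::real_vector \<Rightarrow> real"
  assumes sub: "\<And>x y. P (x+y) \<le> P x + P y" and hom: "\<And>c x. P (c *\<^sub>R x) = \<bar>c\<bar> * P x"
    and M: "hb_adm P u0 M" and x0: "\<forall>a. (x0, a) \<notin> M"
  shows "\<exists>G. hb_adm P u0 G \<and> M \<subseteq> G \<and> G \<noteq> M"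
proof -
  note Md = hb_admD[OF M]
  have Mscale: "(s *\<^sub>R y, s * a) \<in> M" if "(y,a) \<in> M" for s y a
    using Md(3)[OF that, of s] by simp
  have Madd: "(y + y', a + a') \<in> M" if "(y,a) \<in> M" "(y',a') \<in> M" for y a y' a'
    using Md(2)[OF that] by simp
  define S where "S = {a - P (y - x0) | y a. (y,a) \<in> M}"
  define c where "c = Sup S"
  have bnd: "a - P (y - x0) \<le> P (y' + x0) - a'" if "(y,a) \<in> M" "(y',a') \<in> M" for y a y' a'
  proof -
    have "a + a' \<le> P (y + y')" using Md(5) Madd[OF that] by blast
    also have "\<dots> = P ((y - x0) + (y' + x0))" by (simp add: algebra_simps)
    also have "\<dots> \<le> P (y - x0) + P (y' + x0)" by (rule sub)
    finally show ?thesis by simp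
  qed
  have Sne: "S \<noteq> {}" using Md(1) unfolding S_def by blast
  have Sbdd: "bdd_above S"
    unfolding bdd_above_def S_def using bnd[OF _ Md(1)] by auto
  have cup: "a - P (y - x0) \<le> c" if "(y,a) \<in> M" for y a
    unfolding c_def by (rule cSup_upper[OF _ Sbdd]) (use that S_def in blast)
  have clow: "c \<le> P (y' + x0) - a'" if "(y',a') \<in> M" for y' a'
    unfolding c_def by (rule cSup_least[OF Sne]) (use that bnd S_def in blast)
  define G where "G = {(y + t *\<^sub>R x0, a + t * c) | y a t. (y,a) \<in> M}"
  have MG: "M \<subseteq> G"
  proof
    fix g assume "g \<in> M"
    then obtain y a where "g = (y,a)" "(y,a) \<in> M" by (cases g) auto
    then show "g \<in> G" unfolding G_def by (intro CollectI exI[of _ y] exI[of _ a] exI[of _ 0]) simp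
  qed
  have x0G: "(x0, c) \<in> G" unfolding G_def using Md(1)
    by (intro CollectI exI[of _ 0] exI[of _ 0] exI[of _ 1]) simp
  have "hb_adm P u0 G" unfolding hb_adm_def
  proof (intro conjI allI ballI impI)
    show "(0,0) \<in> G" "(u0, P u0) \<in> G" using MG Md(1,6) by auto
  next
    fix g1 g2 assume "g1 \<in> G" "g2 \<in> G"
    then obtain y a t y' a' t' where "(y,a) \<in> M" "(y',a') \<in> M"
      "g1 = (y + t *\<^sub>R x0, a + t * c)" "g2 = (y' + t' *\<^sub>R x0, a' + t' * c)"
      unfolding G_def by blast
    then show "g1 + g2 \<in> G" unfolding G_def
      by (intro CollectI exI[of _ "y+y'"] exI[of _ "a+a'"] exI[of _ "t+t'"])
         (auto simp: Madd algebra_simps)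
  next
    fix s g assume "g \<in> G"
    then obtain y a t where "(y,a) \<in> M" "g = (y + t *\<^sub>R x0, a + t * c)"
      unfolding G_def by blast
    then have "s *\<^sub>R g = (s *\<^sub>R y + (s * t) *\<^sub>R x0, s * a + (s * t) * c) \<and> (s *\<^sub>R y, s * a) \<in> M"
      using Mscale by (simp add: algebra_simps)
    then show "s *\<^sub>R g \<in> G" unfolding G_def by blast
  next
    fix x a b assume "(x,a) \<in> G" "(x,b) \<in> G"
    then obtain y a1 t y' a1' t' where ya: "(y,a1) \<in> M" "(y',a1') \<in> M"
      "(x,a) = (y + t *\<^sub>R x0, a1 + t * c)" "(x,b) = (y' + t' *\<^sub>R x0, a1' + t' * c)"
      unfolding G_def by blast
    have tt: "t = t'"
    proof (rule ccontr)
      assume "t \<noteq> t'"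
      have "(y' + (-1) *\<^sub>R y, a1' + (-1) * a1) \<in> M" using Madd[OF ya(2) Mscale[OF ya(1), of "-1"]] .
      moreover have "y' + (-1) *\<^sub>R y = (t - t') *\<^sub>R x0" using ya by (auto simp: algebra_simps)
      ultimately have "((t - t') *\<^sub>R x0, a1' + (-1) * a1) \<in> M" by simp
      then have "((1/(t-t')) *\<^sub>R ((t - t') *\<^sub>R x0), (1/(t-t')) * (a1' + (-1) * a1)) \<in> M"
        by (rule Mscale)
      then show False using x0 \<open>t \<noteq> t'\<close> by simp
    qed
    then have "y = y'" using ya by auto
    then have "a1 = a1'" using Md(4) ya by blast
    then show "a = b" using ya tt by auto
  next
    fix x a assume "(x,a) \<in> G"
    then obtain y a1 t where ya: "(y,a1) \<in> M" "x = y + t *\<^sub>R x0" "a = a1 + t * c"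
      unfolding G_def by blast
    show "a \<le> P x"
    proof (cases "t = 0")
      case True then show ?thesis using ya Md(5) by auto
    next
      case False
      show ?thesis
      proof (cases "t > 0")
        case True
        have "c \<le> P ((1/t) *\<^sub>R y + x0) - (1/t) * a1" by (rule clow[OF Mscale[OF ya(1)]])
        then have "t * c \<le> t * (P ((1/t) *\<^sub>R y + x0) - (1/t) * a1)" using True
          by (simp add: mult_left_mono)
        then have "t * c \<le> t * P ((1/t) *\<^sub>R y + x0) - a1" using True
          by (simp add: right_diff_distrib)
        also have "t * P ((1/t) *\<^sub>R y + x0) = P (t *\<^sub>R ((1/t) *\<^sub>R y + x0))" using hom True by simp
        also have "t *\<^sub>R ((1/t) *\<^sub>R y + x0) = x" using ya True by (simp add: algebra_simps)
        finally show ?thesis using ya by simp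
      next
        case False
        then have sp: "-t > 0" using \<open>t \<noteq> 0\<close> by simp
        have "(1/(-t)) * a1 - P ((1/(-t)) *\<^sub>R y - x0) \<le> c" by (rule cup[OF Mscale[OF ya(1)]])
        then have "(-t) * ((1/(-t)) * a1 - P ((1/(-t)) *\<^sub>R y - x0)) \<le> (-t) * c"
          using sp by (simp add: mult_left_mono)
        then have "a1 - (-t) * P ((1/(-t)) *\<^sub>R y - x0) \<le> (-t) * c"
          using sp by (simp add: right_diff_distrib)
        also have "(-t) * P ((1/(-t)) *\<^sub>R y - x0) = P ((-t) *\<^sub>R ((1/(-t)) *\<^sub>R y - x0))" using hom[of "-t"] sp by (simp only: abs_of_pos)
        also have "(-t) *\<^sub>R ((1/(-t)) *\<^sub>R y - x0) = x" using ya sp by (simp add: algebra_simps)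
        finally show ?thesis using ya by simp
      qed
    qed
  qed
  moreover have "G \<noteq> M" using x0 x0G by blast
  ultimately show ?thesis using MG by blast
qed

lemma hahn_banach_sublinear:
  fixes P :: "'a::real_vector \<Rightarrow> real"
  assumes sub: "\<And>x y. P (x+y) \<le> P x + P y" and hom: "\<And>c x. P (c *\<^sub>R x) = \<bar>c\<bar> * P x"
  shows "\<exists>f. linear f \<and> f u0 = P u0 \<and> (\<forall>x. f x \<le> P x)"
proof -
  have nn: "0 \<le> P x" for x
  proof -
    have "P 0 = 0" using hom[of 0 0] by simp
    moreover have "P (x + (-1) *\<^sub>R x) \<le> P x + P ((-1) *\<^sub>R x)" by (rule sub)
    ultimately show ?thesis using hom[of "-1" x] by simp
  qed
  have "\<exists>M\<in>{G. hb_adm P u0 G}. \<forall>X\<in>{G. hb_adm P u0 G}. M \<subseteq> X \<longrightarrow> X = M"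
  proof (rule Zorn_Lemma2, intro ballI)
    fix C assume C: "C \<in> chains {G. hb_adm P u0 G}"
    show "\<exists>U\<in>{G. hb_adm P u0 G}. \<forall>X\<in>C. X \<subseteq> U"
    proof (cases "C = {}")
      case True then show ?thesis using hb_base[OF hom nn] by blast
    next
      case False then show ?thesis using hb_chain[OF C] by blast
    qed
  qed
  then obtain M where M: "hb_adm P u0 M" and mx: "\<And>X. hb_adm P u0 X \<Longrightarrow> M \<subseteq> X \<Longrightarrow> X = M" by blast
  have tot: "\<exists>a. (x,a) \<in> M" for x
    using hb_extend[OF sub hom M, of x] mx by blast
  note Md = hb_admD[OF M]
  define f where "f x = (THE a. (x,a) \<in> M)" for x
  have fM: "(x, f x) \<in> M" for x
    unfolding f_def using tot[of x] Md(4) by (metis theI)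
  have fu: "(x,a) \<in> M \<Longrightarrow> f x = a" for x a using fM Md(4) by blast
  have "linear f"
  proof (rule linearI)
    fix x y show "f (x + y) = f x + f y" using fu Md(2)[OF fM[of x] fM[of y]] by simp
  next
    fix c x show "f (c *\<^sub>R x) = c *\<^sub>R f x" using fu Md(3)[OF fM[of x], of c] by simp
  qed
  moreover have "f u0 = P u0" using fu Md(6) by blast
  moreover have "\<forall>x. f x \<le> P x" using fM Md(5) by blast
  ultimately show ?thesis by blast
qed

lemma adm_Hh:
  assumes "admissible_H p H"
  shows "H u = ereal (real_of_ereal (H u))"
proof -
  have "H u \<noteq> \<infinity>" "H u \<noteq> -\<infinity>" using assms
    unfolding admissible_H_def Gamma0_def proper_fun_def by auto
  then show ?thesis by (cases "H u") auto
qed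

lemma adm_hom:
  assumes "admissible_H p H"
  shows "real_of_ereal (H (t *\<^sub>R u)) = \<bar>t\<bar> powr p * real_of_ereal (H u)"
proof -
  have "H (t *\<^sub>R u) = ereal (\<bar>t\<bar> powr p) * H u" using assms unfolding admissible_H_def by blast
  also have "\<dots> = ereal (\<bar>t\<bar> powr p * real_of_ereal (H u))" using adm_Hh[OF assms, of u]
    by (metis times_ereal.simps(1))
  finally show ?thesis by simp
qed

lemma adm_h0:
  assumes "admissible_H p H"
  shows "real_of_ereal (H 0) = 0"
  using adm_hom[OF assms, of 0 0] by simp

lemma adm_convex:
  assumes "admissible_H p H" "0 < t" "t < 1"
  shows "real_of_ereal (H (t *\<^sub>R x + (1 - t) *\<^sub>R y))
     \<le> t * real_of_ereal (H x) + (1 - t) * real_of_ereal (H y)"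
proof -
  have "H (t *\<^sub>R x + (1 - t) *\<^sub>R y) \<le> ereal t * H x + ereal (1 - t) * H y"
    using assms unfolding admissible_H_def Gamma0_def convex_fun_def by blast
  also have "\<dots> = ereal (t * real_of_ereal (H x) + (1 - t) * real_of_ereal (H y))"
    using adm_Hh[OF assms(1), of x] adm_Hh[OF assms(1), of y]
    by (metis plus_ereal.simps(1) times_ereal.simps(1))
  finally show ?thesis using adm_Hh[OF assms(1), of "t *\<^sub>R x + (1 - t) *\<^sub>R y"]
    by (metis ereal_less_eq(3))
qed

lemma adm_nonneg:
  assumes "admissible_H p H"
  shows "0 \<le> real_of_ereal (H u)"
proof -
  have "real_of_ereal (H ((1/2) *\<^sub>R u + (1 - 1/2) *\<^sub>R (-u)))
     \<le> (1/2) * real_of_ereal (H u) + (1 - 1/2) * real_of_ereal (H (-u))"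
    by (rule adm_convex[OF assms]) auto
  moreover have "real_of_ereal (H (-u)) = real_of_ereal (H u)"
    using adm_hom[OF assms, of "-1" u] by simp
  moreover have "(1/2::real) *\<^sub>R u + (1 - 1/2) *\<^sub>R (-u) = 0" by (simp add: algebra_simps)
  ultimately show ?thesis using adm_h0[OF assms] by simp
qed

lemma adm_norm:
  assumes "admissible_H p H"
  shows "is_norm (\<lambda>u. (p * real_of_ereal (H u)) powr (1/p))"
  using assms unfolding admissible_H_def H_norm_def[abs_def] by simp

lemma adm_h_N:
  assumes "admissible_H p H" "1 < p"
  shows "real_of_ereal (H u) = ((p * real_of_ereal (H u)) powr (1/p)) powr p / p"
proof -
  have "0 \<le> p * real_of_ereal (H u)" using adm_nonneg[OF assms(1)] assms(2) by simp
  then have "((p * real_of_ereal (H u)) powr (1/p)) powr p = p * real_of_ereal (H u)"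
    using assms(2) by (simp add: powr_powr)
  then show ?thesis using assms(2) by simp
qed

lemma adm_pos:
  assumes "admissible_H p H" "1 < p" "u \<noteq> 0"
  shows "0 < real_of_ereal (H u)"
proof -
  have "(p * real_of_ereal (H u)) powr (1/p) \<noteq> 0" using adm_norm[OF assms(1)] assms(3)
    unfolding is_norm_def by blast
  then have "real_of_ereal (H u) \<noteq> 0" by auto
  then show ?thesis using adm_nonneg[OF assms(1), of u] by simp
qed

lemma adm_closed:
  assumes "admissible_H p H"
  shows "closed {x. real_of_ereal (H x) \<le> c}"
proof -
  have "{x. real_of_ereal (H x) \<le> c} = {x. H x \<le> ereal c}"
    using adm_Hh[OF assms] by (metis ereal_less_eq(3))
  then show ?thesis using assms unfolding admissible_H_def Gamma0_def lsc_fun_def by simp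
qed

lemma adm_bound:
  fixes H :: "'a::banach \<Rightarrow> ereal"
  assumes adm: "admissible_H p H" and p: "1 < p"
  shows "\<exists>C. \<forall>x. (p * real_of_ereal (H x)) powr (1/p) \<le> C * norm x"
proof -
  define h where "h x = real_of_ereal (H x)" for x
  define N where "N x = (p * h x) powr (1/p)" for x
  have Nn: "is_norm N" using adm_norm[OF adm] unfolding N_def h_def .
  define F where "F n = {x. h x \<le> real n}" for n :: nat
  have "\<exists>n. interior (F n) \<noteq> {}"
  proof (rule ccontr)
    assume "\<not> (\<exists>n. interior (F n) \<noteq> {})"
    then have e: "\<And>n. interior (F n) = {}" by blast
    have "euclidean interior_of \<Union>(range F) = {}"
    proof (rule Baire_category_alt)
      show "completely_metrizable_space (euclidean :: 'a topology) \<or>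
        locally_compact_space (euclidean :: 'a topology) \<and> regular_space (euclidean :: 'a topology)"
        using completely_metrizable_space_euclidean by blast
      show "countable (range F)" by simp
      fix T assume "T \<in> range F"
      then obtain n where "T = F n" by blast
      then show "closedin euclidean T \<and> euclidean interior_of T = {}"
        using adm_closed[OF adm, of "real n"] e[of n] unfolding F_def h_def by simp
    qed
    moreover have "\<Union>(range F) = UNIV"
    proof -
      have "x \<in> F (nat \<lceil>h x\<rceil>)" for x unfolding F_def
        by (simp add: real_nat_ceiling_ge)
      then show ?thesis by blast
    qed
    ultimately show False by simp
  qed
  then obtain n x0 where "x0 \<in> interior (F n)" by blast
  then obtain r where r: "r > 0" "ball x0 r \<subseteq> F n" using mem_interior by blast
  have b0: "h y \<le> real n" if y: "norm y < r" for y
  proof -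
    have "x0 + y \<in> ball x0 r" "x0 - y \<in> ball x0 r" using y by (auto simp: dist_norm)
    then have 1: "h (x0 + y) \<le> real n" "h (x0 - y) \<le> real n" using r(2) unfolding F_def by blast+
    have 2: "h (y - x0) = h (x0 - y)" unfolding h_def using adm_hom[OF adm, of "-1" "x0 - y"] by simp
    have "h ((1/2) *\<^sub>R (x0 + y) + (1 - 1/2) *\<^sub>R (y - x0)) \<le> (1/2) * h (x0 + y) + (1 - 1/2) * h (y - x0)"
      unfolding h_def by (rule adm_convex[OF adm]) auto
    moreover have "(1/2::real) *\<^sub>R (x0 + y) + (1 - 1/2) *\<^sub>R (y - x0) = y"
      by (simp add: algebra_simps flip: scaleR_add_left)
    ultimately show ?thesis using 1 2 by simp
  qed
  define C where "C = (p * real n) powr (1/p) * 2 / r"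
  have "N x \<le> C * norm x" for x
  proof (cases "x = 0")
    case True then show ?thesis using Nn unfolding is_norm_def by (metis order_refl mult_zero_right norm_zero)
  next
    case False
    define c where "c = r / (2 * norm x)"
    have c: "c > 0" using r False unfolding c_def by simp
    have "norm (c *\<^sub>R x) = r / 2" using False r unfolding c_def by simp
    then have "h (c *\<^sub>R x) \<le> real n" using b0 r by simp
    then have "N (c *\<^sub>R x) \<le> (p * real n) powr (1/p)" unfolding N_def
      using p adm_nonneg[OF adm, of "c *\<^sub>R x"] unfolding h_def by (intro powr_mono2) auto
    moreover have "N (c *\<^sub>R x) = c * N x" using Nn c unfolding is_norm_def by simp
    ultimately have "c * N x \<le> (p * real n) powr (1/p)" by simp
    then have "N x \<le> (p * real n) powr (1/p) / c" using c by (simp add: field_simps)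
    also have "\<dots> = C * norm x" unfolding C_def c_def using r False by (simp add: field_simps)
    finally show ?thesis .
  qed
  then show ?thesis unfolding N_def h_def by blast
qed

lemma adm_norming:
  fixes H :: "'a::banach \<Rightarrow> ereal"
  assumes adm: "admissible_H p H" and p: "1 < p"
  shows "\<exists>z::'a \<Rightarrow>\<^sub>L real. blinfun_apply z u0 = (p * real_of_ereal (H u0)) powr (1/p)
            \<and> (\<forall>x. blinfun_apply z x \<le> (p * real_of_ereal (H x)) powr (1/p))"
proof -
  define N where "N x = (p * real_of_ereal (H x)) powr (1/p)" for x
  have Nn: "is_norm N" using adm_norm[OF adm] unfolding N_def .
  obtain C where C: "\<And>x. N x \<le> C * norm x" using adm_bound[OF adm p] unfolding N_def by blast
  have "\<exists>f. linear f \<and> f u0 = N u0 \<and> (\<forall>x. f x \<le> N x)"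
    by (rule hahn_banach_sublinear) (use Nn in \<open>auto simp: is_norm_def\<close>)
  then obtain f where f: "linear f" "f u0 = N u0" "\<And>x. f x \<le> N x" by blast
  have "bounded_linear f"
  proof (rule bounded_linear_intro[where K = C])
    show "f (x + y) = f x + f y" for x y using linear_add[OF f(1)] .
    show "f (r *\<^sub>R x) = r *\<^sub>R f x" for r x using linear_scale[OF f(1)] .
    fix x
    have "f (-x) = - f x" using linear_neg[OF f(1)] .
    moreover have "N (-x) = N x" using Nn unfolding is_norm_def by (metis abs_minus_cancel abs_one mult_1 scaleR_minus1_left)
    ultimately have "\<bar>f x\<bar> \<le> N x" using f(3)[of x] f(3)[of "-x"] by linarith
    then show "norm (f x) \<le> norm x * C" using C[of x] by (simp add: mult.commute)
  qed
  then show ?thesis using f unfolding N_def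
    by (intro exI[of _ "Blinfun f"]) (simp add: bounded_linear_Blinfun_apply)
qed

lemma adm_subgrad:
  assumes adm: "admissible_H p H" and w: "w \<in> subdiff H u"
  shows "real_of_ereal (H u) + blinfun_apply w (v - u) \<le> real_of_ereal (H v)"
proof -
  have "H u + ereal (blinfun_apply w (v - u)) \<le> H v" using w unfolding subdiff_def by blast
  then show ?thesis using adm_Hh[OF adm, of u] adm_Hh[OF adm, of v]
    by (metis ereal_less_eq(3) plus_ereal.simps(1))
qed

lemma adm_euler:
  assumes adm: "admissible_H p H" and p: "1 < p" and w: "w \<in> subdiff H u"
  shows "blinfun_apply w u = p * real_of_ereal (H u)"
proof -
  define h where "h = real_of_ereal (H u)"
  define a where "a = blinfun_apply w u"
  have ineq: "h + s * a \<le> (1 + s) powr p * h" if "s > -1" for s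
  proof -
    have "real_of_ereal (H u) + blinfun_apply w ((1 + s) *\<^sub>R u - u) \<le> real_of_ereal (H ((1 + s) *\<^sub>R u))"
      by (rule adm_subgrad[OF adm w])
    moreover have "(1 + s) *\<^sub>R u - u = s *\<^sub>R u" by (simp add: algebra_simps)
    moreover have "real_of_ereal (H ((1 + s) *\<^sub>R u)) = (1 + s) powr p * h"
      using adm_hom[OF adm, of "1+s" u] that unfolding h_def by simp
    ultimately show ?thesis unfolding h_def a_def by (simp add: blinfun.scaleR_right)
  qed
  have D: "((\<lambda>s. ((1 + s) powr p - 1 powr p) / s) \<longlongrightarrow> p * 1 powr (p - 1)) (at 0)"
    using has_real_derivative_powr[of 1 p] unfolding DERIV_def by (simp add: add.commute)
  then have D': "((\<lambda>s. h * (((1 + s) powr p - 1) / s)) \<longlongrightarrow> h * p) (at 0)"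
    by (intro tendsto_mult tendsto_const) simp
  have le: "a \<le> h * p"
  proof (rule tendsto_le[OF _ tendsto_mono[OF at_le D'] tendsto_const])
    show "\<not> trivial_limit (at_right (0::real))" by simp
    show "\<forall>\<^sub>F s in at_right 0. a \<le> h * (((1 + s) powr p - 1) / s)"
      using eventually_at_right_real[of "0::real" 1, OF zero_less_one]
    proof (rule eventually_mono)
      fix s :: real assume "s \<in> {0<..<1}"
      then have s: "s > 0" by simp
      then have "s * a \<le> ((1 + s) powr p - 1) * h" using ineq[of s] by (simp add: algebra_simps)
      then show "a \<le> h * (((1 + s) powr p - 1) / s)" using s by (simp add: field_simps)
    qed
  qed simp
  have ge: "h * p \<le> a"
  proof (rule tendsto_le[OF _ tendsto_const tendsto_mono[OF at_le D']])
    show "\<not> trivial_limit (at_left (0::real))" by simp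
    show "\<forall>\<^sub>F s in at_left 0. h * (((1 + s) powr p - 1) / s) \<le> a"
      using eventually_at_left_real[of "-1" "0::real", OF neg_less_0_iff_less[THEN iffD2, OF zero_less_one]]
    proof (rule eventually_mono)
      fix s :: real assume "s \<in> {-1<..<0}"
      then have s: "s < 0" "s > -1" by auto
      then have "s * a \<le> ((1 + s) powr p - 1) * h" using ineq[of s] by (simp add: algebra_simps)
      then show "h * (((1 + s) powr p - 1) / s) \<le> a" using s by (simp add: field_simps)
    qed
  qed simp
  show ?thesis using le ge unfolding a_def h_def by simp
qed

lemma key1:
  fixes lam p q :: real
  assumes p: "1 < p" and q: "q = p / (p - 1)" and lam: "lam > 0"
  shows "lam * (lam powr (1 - q)) powr p = lam powr (1 - q)"
proof -
  have "1 + (1 - q) * p = 1 - q" using p unfolding q by (simp add: field_simps)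
  moreover have "lam * lam powr ((1 - q) * p) = lam powr (1 + (1 - q) * p)"
    using lam by (simp add: powr_add)
  ultimately show ?thesis using lam by (simp add: powr_powr)
qed

lemma adm_conj:
  assumes adm: "admissible_H p H"
  shows "fenchel_conj H z = (SUP v. ereal (blinfun_apply z v - real_of_ereal (H v)))"
proof -
  have "\<And>v. ereal (blinfun_apply z v) - H v = ereal (blinfun_apply z v - real_of_ereal (H v))"
    using adm_Hh[OF adm] by (metis ereal_minus(1))
  then show ?thesis unfolding fenchel_conj_def by simp
qed

lemma fwd:
  fixes J H :: "'a::real_normed_vector \<Rightarrow> ereal" and p q lam :: real
  assumes adm: "admissible_H p H" and p: "1 < p" and q: "q = p / (p - 1)" and lam: "lam > 0"
    and ge: "\<forall>u. J u \<ge> ereal lam * H u"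
  shows "fenchel_conj J z \<le> ereal (lam powr (1 - q)) * fenchel_conj H z"
proof -
  define t where "t = lam powr (1 - q)"
  have t: "t > 0" using lam by (simp add: t_def)
  have kt: "lam * t powr p = t" using key1[OF p q lam] unfolding t_def .
  define h where "h v = real_of_ereal (H v)" for v
  have Hh: "H v = ereal (h v)" for v using adm_Hh[OF adm] unfolding h_def by simp
  show ?thesis unfolding fenchel_conj_def[of J] t_def[symmetric]
  proof (rule SUP_least)
    fix u :: 'a
    define v where "v = (1/t) *\<^sub>R u"
    have uv1: "t *\<^sub>R v = (t * (1/t)) *\<^sub>R u" by (simp only: v_def scaleR_scaleR)
    have uv2: "t * (1/t) = 1" using t by simp
    have uv: "u = t *\<^sub>R v" using uv1 uv2 by simp
    have "ereal (blinfun_apply z u) - J u \<le> ereal (blinfun_apply z u) - ereal lam * H u"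
      using ge by (intro ereal_minus_mono) auto
    also have "\<dots> = ereal (blinfun_apply z u - lam * h u)" by (simp add: Hh)
    also have "blinfun_apply z u - lam * h u = t * (blinfun_apply z v - h v)"
    proof -
      have "blinfun_apply z u = t * blinfun_apply z v" unfolding uv by (simp add: blinfun.scaleR_right)
      moreover have "h u = t powr p * h v" unfolding uv h_def using adm_hom[OF adm, of t v] t by simp
      ultimately show ?thesis using kt by (simp add: algebra_simps)
    qed
    also have "ereal (t * (blinfun_apply z v - h v)) = ereal t * (ereal (blinfun_apply z v) - H v)"
      by (simp add: Hh)
    also have "\<dots> \<le> ereal t * fenchel_conj H z"
      unfolding fenchel_conj_def using t by (intro ereal_mult_left_mono SUP_upper) auto
    finally show "ereal (blinfun_apply z u) - J u \<le> ereal t * fenchel_conj H z" .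
  qed
qed

lemma J0:
  assumes J: "Gamma0 J" and adm: "admissible_H p H" and growth: "\<exists>c>0. \<forall>u. H u \<le> ereal c * J u"
  shows "0 \<le> J 0"
proof -
  obtain c where c: "c > 0" "H 0 \<le> ereal c * J 0" using growth by blast
  have H0: "H 0 = 0" using adm_Hh[OF adm, of 0] adm_h0[OF adm] by (simp add: zero_ereal_def)
  have "J 0 \<noteq> -\<infinity>" using J unfolding Gamma0_def proper_fun_def by blast
  then show ?thesis using c H0
    by (cases "J 0") (auto simp: zero_le_mult_iff)
qed

lemma ident:
  fixes p q lam n :: real
  assumes p: "1 < p" and q: "q = p / (p - 1)" and lam: "lam > 0" and n: "n > 0"
  shows "(n / lam powr (1 - q)) powr (p - 1) * n
      - lam powr (1 - q) * (((n / lam powr (1 - q)) powr (p - 1)) powr q / q) = lam * (n powr p / p)"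
proof -
  define t where "t = lam powr (1 - q)"
  have t: "t > 0" using lam by (simp add: t_def)
  have kt: "lam * t powr p = t" using key1[OF p q lam] unfolding t_def .
  define a where "a = n / t"
  have a: "a > 0" using n t by (simp add: a_def)
  have na: "n = a * t" using t by (simp add: a_def)
  have 1: "a powr (p - 1) * n = t * a powr p"
  proof -
    have "a powr (p - 1) * a = a powr p" using powr_mult_base[OF less_imp_le[OF a], of "p - 1"] by (simp add: mult.commute)
    then show ?thesis unfolding na by (simp add: algebra_simps)
  qed
  have 2: "(a powr (p - 1)) powr q = a powr p"
  proof -
    have "(p - 1) * q = p" using p unfolding q by (simp add: field_simps)
    then show ?thesis by (simp add: powr_powr)
  qed
  have 3: "1 - 1/q = 1/p" using p unfolding q by (simp add: field_simps)
  have 4: "a powr p = n powr p / t powr p" unfolding a_def using n t by (simp add: powr_divide)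
  have 5: "t / t powr p = lam" using kt t by (simp add: field_simps)
  have "a powr (p - 1) * n - t * ((a powr (p - 1)) powr q / q) = t * a powr p * (1 - 1/q)"
    unfolding 1 2 by (simp add: algebra_simps)
  also have "\<dots> = n powr p * (t / t powr p) / p" unfolding 3 4 by simp
  also have "\<dots> = lam * (n powr p / p)" unfolding 5 by simp
  finally show ?thesis unfolding a_def t_def .
qed

lemma bwd:
  fixes J H :: "'a::banach \<Rightarrow> ereal" and p q lam :: real
  assumes J: "Gamma0 J" and adm: "admissible_H p H" and p: "1 < p" and q: "q = p / (p - 1)"
    and lam: "lam > 0" and growth: "\<exists>c>0. \<forall>u. H u \<le> ereal c * J u"
    and le: "\<forall>z. fenchel_conj J z \<le> ereal (lam powr (1 - q)) * fenchel_conj H z"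
  shows "ereal lam * H u0 \<le> J u0"
proof -
  define t where "t = lam powr (1 - q)"
  have t: "t > 0" using lam by (simp add: t_def)
  define h where "h v = real_of_ereal (H v)" for v
  have Hh: "H v = ereal (h v)" for v using adm_Hh[OF adm] unfolding h_def by simp
  define N where "N x = (p * h x) powr (1/p)" for x
  have q1: "q > 1" using p unfolding q by (simp add: field_simps)
  have pq: "1/q + 1/p = 1" using p unfolding q by (simp add: field_simps)
  show ?thesis
  proof (cases "u0 = 0")
    case True
    have "h 0 = 0" using adm_h0[OF adm] unfolding h_def .
    then show ?thesis using True J0[OF J adm growth] by (simp add: Hh zero_ereal_def)
  next
    case False
    show ?thesis
    proof (rule ccontr)
      assume "\<not> ereal lam * H u0 \<le> J u0"
      then have lt: "J u0 < ereal (lam * h u0)" by (simp add: Hh)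
      have "J u0 \<noteq> -\<infinity>" using J unfolding Gamma0_def proper_fun_def by blast
      then obtain j where Jj: "J u0 = ereal j" using lt by (cases "J u0") auto
      have j: "j < lam * h u0" using lt Jj by simp
      define n where "n = N u0"
      have hpos: "h u0 > 0" using adm_pos[OF adm p False] unfolding h_def .
      have n: "n > 0" unfolding n_def N_def using hpos p by simp
      have hu0: "h u0 = n powr p / p" unfolding n_def N_def h_def using adm_h_N[OF adm p] .
      obtain z0 where z0: "blinfun_apply z0 u0 = n" "\<And>x. blinfun_apply z0 x \<le> N x"
        using adm_norming[OF adm p, of u0] unfolding n_def N_def h_def by blast
      define s where "s = (n / t) powr (p - 1)"
      have s: "s > 0" using n t by (simp add: s_def)
      define z where "z = s *\<^sub>R z0"
      have Hs: "fenchel_conj H z \<le> ereal (s powr q / q)"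
        unfolding adm_conj[OF adm]
      proof (rule SUP_least)
        fix v :: 'a
        have Nn: "N v \<ge> 0" unfolding N_def by simp
        have "blinfun_apply z v = s * blinfun_apply z0 v" unfolding z_def by (simp add: scaleR_blinfun.rep_eq)
        also have "\<dots> \<le> s * N v" using z0(2)[of v] s by (simp add: mult_left_mono)
        also have "\<dots> \<le> s powr q / q + N v powr p / p"
          using Youngs_inequality[OF q1 p pq, of s "N v"] s Nn by simp
        finally have "blinfun_apply z v - h v \<le> s powr q / q"
          using adm_h_N[OF adm p, of v] unfolding N_def h_def by simp
        then show "ereal (blinfun_apply z v - real_of_ereal (H v)) \<le> ereal (s powr q / q)"
          unfolding h_def by simp
      qed
      have Js: "ereal (s * n - j) \<le> fenchel_conj J z"
        unfolding fenchel_conj_def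
      proof (rule SUP_upper2[of u0])
        show "ereal (s * n - j) \<le> ereal (blinfun_apply z u0) - J u0"
          using z0(1) Jj unfolding z_def by (simp add: scaleR_blinfun.rep_eq)
      qed simp
      have "ereal (s * n - j) \<le> ereal t * ereal (s powr q / q)"
        using Js le[rule_format, of z] Hs t unfolding t_def[symmetric]
        by (meson ereal_less_eq(5) ereal_mult_left_mono less_imp_le order_trans ereal_less_eq(3))
      then have "s * n - j \<le> t * (s powr q / q)" by simp
      moreover have "s * n - t * (s powr q / q) = lam * (n powr p / p)"
        using ident[OF p q lam n] unfolding s_def t_def .
      ultimately show False using j hu0 by simp
    qed
  qed
qed

lemma eig:
  fixes J H :: "'a::real_normed_vector \<Rightarrow> ereal" and p q lam :: real
  assumes J: "Gamma0 J" and adm: "admissible_H p H" and p: "1 < p" and q: "q = p / (p - 1)"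
    and lam: "lam > 0" and ev: "p_eigenvector J H u z lam"
  shows "dual_rayleigh J H z = ereal (lam powr (1 - q))"
proof -
  define h where "h v = real_of_ereal (H v)" for v
  have Hh: "H v = ereal (h v)" for v using adm_Hh[OF adm] unfolding h_def by simp
  have u: "u \<noteq> 0" and zJ: "z \<in> subdiff J u" and R: "J u / H u = ereal lam"
    using ev unfolding p_eigenvector_def rayleigh_def by auto
  obtain w where w: "w \<in> subdiff H u" and zw: "z = lam *\<^sub>R w"
    using ev unfolding p_eigenvector_def by auto
  have hu: "h u > 0" using adm_pos[OF adm p u] unfolding h_def .
  have Ju: "J u = ereal (lam * h u)"
  proof -
    have "J u = ereal (h u) * ereal lam" using R hu unfolding Hh by (subst (asm) ereal_divide_eq) auto
    then show ?thesis by (simp add: mult.commute)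
  qed
  have zv: "blinfun_apply z v = lam * blinfun_apply w v" for v
    unfolding zw by (simp add: scaleR_blinfun.rep_eq)
  have eu: "blinfun_apply w u = p * h u" using adm_euler[OF adm p w] unfolding h_def .
  have Jc: "fenchel_conj J z = ereal (blinfun_apply z u - lam * h u)"
  proof (rule antisym)
    show "fenchel_conj J z \<le> ereal (blinfun_apply z u - lam * h u)"
      unfolding fenchel_conj_def
    proof (rule SUP_least)
      fix v :: 'a
      have sg: "J u + ereal (blinfun_apply z (v - u)) \<le> J v" using zJ unfolding subdiff_def by blast
      have "J v \<noteq> -\<infinity>" using J unfolding Gamma0_def proper_fun_def by blast
      then show "ereal (blinfun_apply z v) - J v \<le> ereal (blinfun_apply z u - lam * h u)"
      proof (cases "J v")
        case (real jv)
        then have "lam * h u + (blinfun_apply z v - blinfun_apply z u) \<le> jv"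
          using sg Ju by (simp add: blinfun.diff_right)
        then show ?thesis using real by simp
      qed auto
    qed
    show "ereal (blinfun_apply z u - lam * h u) \<le> fenchel_conj J z"
      unfolding fenchel_conj_def by (rule SUP_upper2[of u]) (auto simp: Ju)
  qed
  define \<sigma> where "\<sigma> = lam powr (q - 1)"
  have sg: "\<sigma> > 0" using lam by (simp add: \<sigma>_def)
  have sp1: "\<sigma> powr (p - 1) = lam"
  proof -
    have "(q - 1) * (p - 1) = 1" using p unfolding q by (simp add: field_simps)
    then show ?thesis unfolding \<sigma>_def using lam by (simp add: powr_powr)
  qed
  define P where "P = \<sigma> powr p"
  have P: "P = \<sigma> * lam"
  proof -
    have "\<sigma> * \<sigma> powr (p - 1) = \<sigma> powr (1 + (p - 1))"
      using powr_mult_base[OF less_imp_le[OF sg]] by simp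
    then show ?thesis unfolding P_def using sp1 by simp
  qed
  have Pp: "P > 0" using P sg lam by simp
  have hsu: "h (\<sigma> *\<^sub>R u) = P * h u" unfolding h_def P_def using adm_hom[OF adm, of \<sigma> u] sg by simp
  have Hc: "fenchel_conj H z = ereal (blinfun_apply z (\<sigma> *\<^sub>R u) - h (\<sigma> *\<^sub>R u))"
  proof (rule antisym)
    show "fenchel_conj H z \<le> ereal (blinfun_apply z (\<sigma> *\<^sub>R u) - h (\<sigma> *\<^sub>R u))"
      unfolding adm_conj[OF adm]
    proof (rule SUP_least)
      fix v :: 'a
      have a: "h u + blinfun_apply w ((1/\<sigma>) *\<^sub>R v - u) \<le> h ((1/\<sigma>) *\<^sub>R v)"
        using adm_subgrad[OF adm w] unfolding h_def .
      have b: "h ((1/\<sigma>) *\<^sub>R v) = h v / P"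
        unfolding h_def P_def using adm_hom[OF adm, of "1/\<sigma>" v] sg by (simp add: powr_divide)
      have "h u + (1/\<sigma>) * blinfun_apply w v - blinfun_apply w u \<le> h v / P"
        using a b by (simp add: blinfun.diff_right blinfun.scaleR_right)
      then have "P * (h u + (1/\<sigma>) * blinfun_apply w v - blinfun_apply w u) \<le> h v"
        using Pp by (simp add: field_simps)
      then have "\<sigma> * lam * h u + lam * blinfun_apply w v - \<sigma> * lam * blinfun_apply w u \<le> h v"
        unfolding P using sg by (simp add: algebra_simps)
      then have "blinfun_apply z v - h v \<le> blinfun_apply z (\<sigma> *\<^sub>R u) - h (\<sigma> *\<^sub>R u)"
        unfolding hsu P zv by (simp add: blinfun.scaleR_right algebra_simps)
      then show "ereal (blinfun_apply z v - real_of_ereal (H v))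
          \<le> ereal (blinfun_apply z (\<sigma> *\<^sub>R u) - h (\<sigma> *\<^sub>R u))" unfolding h_def by simp
    qed
    show "ereal (blinfun_apply z (\<sigma> *\<^sub>R u) - h (\<sigma> *\<^sub>R u)) \<le> fenchel_conj H z"
      unfolding adm_conj[OF adm] h_def by (rule SUP_upper2[of "\<sigma> *\<^sub>R u"]) auto
  qed
  have A: "blinfun_apply z u - lam * h u = lam * (p - 1) * h u" using zv eu by (simp add: algebra_simps)
  have B: "blinfun_apply z (\<sigma> *\<^sub>R u) - h (\<sigma> *\<^sub>R u) = \<sigma> * (lam * (p - 1) * h u)"
    unfolding hsu P using zv eu by (simp add: blinfun.scaleR_right algebra_simps)
  have nz: "lam * (p - 1) * h u \<noteq> 0" using lam p hu by simp
  have "dual_rayleigh J H z = ereal ((lam * (p - 1) * h u) / (\<sigma> * (lam * (p - 1) * h u)))"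
    unfolding dual_rayleigh_def Jc Hc A B using sg nz by simp
  also have "(lam * (p - 1) * h u) / (\<sigma> * (lam * (p - 1) * h u)) = 1 / \<sigma>" using nz sg by simp
  also have "1 / \<sigma> = lam powr (1 - q)" unfolding \<sigma>_def using lam by (simp add: powr_minus_divide[symmetric])
  finally show ?thesis .
qed

theorem lemma2p2:
  fixes J H :: "'a::banach \<Rightarrow> ereal" and p q lam :: real
  assumes refl: "reflexive_space TYPE('a)"
    and p: "1 < p" and q: "q = p / (p - 1)"
    and J: "Gamma0 J" and H: "admissible_H p H"
    and growth: "\<exists>c>0. \<forall>u. H u \<le> ereal c * J u"
    and lam: "lam > 0"
  shows "((\<forall>u. J u \<ge> ereal lam * H u) \<longleftrightarrow>
           (\<forall>z. fenchel_conj J z \<le> ereal (lam powr (1 - q)) * fenchel_conj H z))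
       \<and> (\<forall>u z. p_eigenvector J H u z lam \<and> (\<forall>v. v \<noteq> 0 \<longrightarrow> ereal lam \<le> rayleigh J H v) \<longrightarrow>
           dual_rayleigh J H z = ereal (lam powr (1 - q)) \<and>
           (\<forall>w. w \<noteq> 0 \<longrightarrow> dual_rayleigh J H w \<le> ereal (lam powr (1 - q))))"
proof (intro conjI allI impI iffI)
  show "fenchel_conj J z \<le> ereal (lam powr (1 - q)) * fenchel_conj H z"
    if "\<forall>u. ereal lam * H u \<le> J u" for z
    using fwd[OF H p q lam that] .
  show "ereal lam * H u \<le> J u"
    if "\<forall>z. fenchel_conj J z \<le> ereal (lam powr (1 - q)) * fenchel_conj H z" for u
    using bwd[OF J H p q lam growth that] .
next
  fix u z
  assume a: "p_eigenvector J H u z lam \<and> (\<forall>v. v \<noteq> 0 \<longrightarrow> ereal lam \<le> rayleigh J H v)"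
  show "dual_rayleigh J H z = ereal (lam powr (1 - q))" using eig[OF J H p q lam] a by blast
  define h where "h v = real_of_ereal (H v)" for v
  have Hh: "H v = ereal (h v)" for v using adm_Hh[OF H] unfolding h_def by simp
  have ge: "\<forall>v. ereal lam * H v \<le> J v"
  proof
    fix v
    show "ereal lam * H v \<le> J v"
    proof (cases "v = 0")
      case True
      have "h 0 = 0" using adm_h0[OF H] unfolding h_def .
      then show ?thesis using True J0[OF J H growth] by (simp add: Hh zero_ereal_def)
    next
      case False
      have hv: "h v > 0" using adm_pos[OF H p False] unfolding h_def .
      have "ereal lam \<le> J v / ereal (h v)" using a False unfolding rayleigh_def Hh by blast
      then have "ereal (h v) * ereal lam \<le> J v" using hv by (subst (asm) ereal_le_divide_pos) auto
      then show ?thesis by (simp add: Hh mult.commute)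
    qed
  qed
  fix w :: "'a \<Rightarrow>\<^sub>L real"
  define t where "t = lam powr (1 - q)"
  have t: "t > 0" using lam by (simp add: t_def)
  have A: "fenchel_conj J w \<le> ereal t * fenchel_conj H w" using fwd[OF H p q lam ge] unfolding t_def .
  have H0: "0 \<le> fenchel_conj H w"
    unfolding adm_conj[OF H] by (rule SUP_upper2[of 0]) (auto simp: adm_h0[OF H])
  have "fenchel_conj J w / fenchel_conj H w \<le> ereal t"
  proof (cases "fenchel_conj H w")
    case (real r)
    then have r: "r \<ge> 0" using H0 by simp
    show ?thesis
    proof (cases "r = 0")
      case True
      then have "fenchel_conj J w \<le> 0" using A real by (simp add: zero_ereal_def)
      then show ?thesis using real True t
        by (cases "fenchel_conj J w") (auto simp: divide_ereal_def)
    next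
      case False
      then have "r > 0" using r by simp
      then show ?thesis using real A by (subst ereal_divide_le_pos) (auto simp: mult.commute)
    qed
  next
    case PInf
    then show ?thesis using t by simp
  next
    case MInf
    then show ?thesis using H0 by simp
  qed
  then show "dual_rayleigh J H w \<le> ereal (lam powr (1 - q))"
    unfolding dual_rayleigh_def t_def .
qed

end
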